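(* There exist infinitely many finite groups $G$ whose prime graph $\Gamma_e(G)$ is a path with two edges (on three vertices) while the codegree graph $\Gamma(G)$ is a triangle.
   Context: For $\chi\in{\rm Irr}(G)$, ${\rm cod}(\chi)=|G:\ker\chi|/\chi(1)$. The codegree graph $\Gamma(G)$ has vertices the prime divisors of $|G|$, distinct $p,q$ adjacent iff $pq$ divides ${\rm cod}(\chi)$ for some $\chi\in{\rm Irr}(G)$. The prime graph $\Gamma_e(G)$ has the same vertices, distinct $p,q$ adjacent iff $G$ has an element of order divisible by $pq$. *)

theory Defs
  imports "HOL-Algebra.Multiplicative_Group" "Jordan_Normal_Form.Matrix" "HOL-Computational_Algebra.Primes"
begin

definition is_rep :: "('g, 'b) monoid_scheme \<Rightarrow> nat \<Rightarrow> ('g \<Rightarrow> complex mat) \<Rightarrow> bool" where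
  "is_rep G n \<rho> \<longleftrightarrow>
     (\<forall>g\<in>carrier G. \<rho> g \<in> carrier_mat n n) \<and>
     (\<forall>g\<in>carrier G. \<forall>h\<in>carrier G. \<rho> (g \<otimes>\<^bsub>G\<^esub> h) = \<rho> g * \<rho> h) \<and>
     \<rho> \<one>\<^bsub>G\<^esub> = 1\<^sub>m n"

definition inv_subspace :: "('g, 'b) monoid_scheme \<Rightarrow> nat \<Rightarrow> ('g \<Rightarrow> complex mat) \<Rightarrow> complex vec set \<Rightarrow> bool" where
  "inv_subspace G n \<rho> W \<longleftrightarrow>
     W \<subseteq> carrier_vec n \<and> 0\<^sub>v n \<in> W \<and>
     (\<forall>v\<in>W. \<forall>w\<in>W. v + w \<in> W) \<and>
     (\<forall>c::complex. \<forall>v\<in>W. c \<cdot>\<^sub>v v \<in> W) \<and>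
     (\<forall>g\<in>carrier G. \<forall>v\<in>W. \<rho> g *\<^sub>v v \<in> W)"

(* irreducible complex representation of degree n (affording an irreducible character of degree n) *)
definition irr_rep :: "('g, 'b) monoid_scheme \<Rightarrow> nat \<Rightarrow> ('g \<Rightarrow> complex mat) \<Rightarrow> bool" where
  "irr_rep G n \<rho> \<longleftrightarrow> n > 0 \<and> is_rep G n \<rho> \<and>
     (\<forall>W. inv_subspace G n \<rho> W \<longrightarrow> W = {0\<^sub>v n} \<or> W = carrier_vec n)"

(* kernel of the representation = kernel of its character *)
definition rep_ker :: "('g, 'b) monoid_scheme \<Rightarrow> nat \<Rightarrow> ('g \<Rightarrow> complex mat) \<Rightarrow> 'g set" where
  "rep_ker G n \<rho> = {g\<in>carrier G. \<rho> g = 1\<^sub>m n}"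

(* codegree |G : ker chi| / chi(1); this is always an integer for chi irreducible *)
definition rep_cod :: "('g, 'b) monoid_scheme \<Rightarrow> nat \<Rightarrow> ('g \<Rightarrow> complex mat) \<Rightarrow> nat" where
  "rep_cod G n \<rho> = card (carrier G) div (card (rep_ker G n \<rho>) * n)"

definition group_primes :: "('g, 'b) monoid_scheme \<Rightarrow> nat set" where
  "group_primes G = {p. prime p \<and> p dvd card (carrier G)}"

definition cod_adj :: "('g, 'b) monoid_scheme \<Rightarrow> nat \<Rightarrow> nat \<Rightarrow> bool" where
  "cod_adj G p q \<longleftrightarrow> p \<noteq> q \<and> p \<in> group_primes G \<and> q \<in> group_primes G \<and>
     (\<exists>n \<rho>. irr_rep G n \<rho> \<and> p * q dvd rep_cod G n \<rho>)"

definition prime_adj :: "('g, 'b) monoid_scheme \<Rightarrow> nat \<Rightarrow> nat \<Rightarrow> bool" where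
  "prime_adj G p q \<longleftrightarrow> p \<noteq> q \<and> p \<in> group_primes G \<and> q \<in> group_primes G \<and>
     (\<exists>g\<in>carrier G. p * q dvd group.ord G g)"

definition edges :: "nat set \<Rightarrow> (nat \<Rightarrow> nat \<Rightarrow> bool) \<Rightarrow> nat set set" where
  "edges V E = {{p, q} | p q. p \<in> V \<and> q \<in> V \<and> E p q}"

definition is_path3 :: "nat set \<Rightarrow> (nat \<Rightarrow> nat \<Rightarrow> bool) \<Rightarrow> bool" where
  "is_path3 V E \<longleftrightarrow> card V = 3 \<and> card (edges V E) = 2"

definition is_triangle :: "nat set \<Rightarrow> (nat \<Rightarrow> nat \<Rightarrow> bool) \<Rightarrow> bool" where
  "is_triangle V E \<longleftrightarrow> card V = 3 \<and> (\<forall>p\<in>V. \<forall>q\<in>V. p \<noteq> q \<longrightarrow> E p q)"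

end

theory Submission
  imports Defs "HOL-Algebra.Sym_Groups"
begin


definition tr :: "('a,'b) monoid_scheme \<Rightarrow> ('a \<Rightarrow> nat) \<Rightarrow> nat monoid" where
  "tr H f = \<lparr>carrier = f ` carrier H,
     Group.monoid.mult = (\<lambda>x y. f (inv_into (carrier H) f x \<otimes>\<^bsub>H\<^esub> inv_into (carrier H) f y)),
     Group.monoid.one = f \<one>\<^bsub>H\<^esub>\<rparr>"

lemma tr_carrier: "carrier (tr H f) = f ` carrier H" by (simp add: tr_def)
lemma tr_one: "\<one>\<^bsub>tr H f\<^esub> = f \<one>\<^bsub>H\<^esub>" by (simp add: tr_def)
lemma tr_mult: "inj_on f (carrier H) \<Longrightarrow> x \<in> carrier H \<Longrightarrow> y \<in> carrier H \<Longrightarrow>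
   f x \<otimes>\<^bsub>tr H f\<^esub> f y = f (x \<otimes>\<^bsub>H\<^esub> y)"
  by (simp add: tr_def)

lemma tr_group:
  assumes G: "group H" and inj: "inj_on f (carrier H)"
  shows "group (tr H f)"
proof (rule groupI)
  interpret group H by (rule G)
  show "\<And>x y. x \<in> carrier (tr H f) \<Longrightarrow> y \<in> carrier (tr H f) \<Longrightarrow> x \<otimes>\<^bsub>tr H f\<^esub> y \<in> carrier (tr H f)"
    using inj by (auto simp: tr_carrier tr_mult)
  show "\<one>\<^bsub>tr H f\<^esub> \<in> carrier (tr H f)" by (simp add: tr_carrier tr_one)
  show "\<And>x y z. x \<in> carrier (tr H f) \<Longrightarrow> y \<in> carrier (tr H f) \<Longrightarrow> z \<in> carrier (tr H f) \<Longrightarrow>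
     x \<otimes>\<^bsub>tr H f\<^esub> y \<otimes>\<^bsub>tr H f\<^esub> z = x \<otimes>\<^bsub>tr H f\<^esub> (y \<otimes>\<^bsub>tr H f\<^esub> z)"
    using inj by (auto simp: tr_carrier tr_mult m_assoc)
  show "\<And>x. x \<in> carrier (tr H f) \<Longrightarrow> \<one>\<^bsub>tr H f\<^esub> \<otimes>\<^bsub>tr H f\<^esub> x = x"
    using inj by (auto simp: tr_carrier tr_mult tr_one)
  show "\<And>x. x \<in> carrier (tr H f) \<Longrightarrow> \<exists>y\<in>carrier (tr H f). y \<otimes>\<^bsub>tr H f\<^esub> x = \<one>\<^bsub>tr H f\<^esub>"
  proof -
    fix x assume "x \<in> carrier (tr H f)"
    then obtain a where a: "a \<in> carrier H" "x = f a" by (auto simp: tr_carrier)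
    show "\<exists>y\<in>carrier (tr H f). y \<otimes>\<^bsub>tr H f\<^esub> x = \<one>\<^bsub>tr H f\<^esub>"
      by (rule bexI[of _ "f (inv\<^bsub>H\<^esub> a)"]) (use a inj in \<open>auto simp: tr_carrier tr_mult tr_one\<close>)
  qed
qed

lemma tr_pow:
  assumes G: "group H" and inj: "inj_on f (carrier H)" and x: "x \<in> carrier H"
  shows "f x [^]\<^bsub>tr H f\<^esub> (n::nat) = f (x [^]\<^bsub>H\<^esub> n)"
proof (induction n)
  case 0 then show ?case by (simp add: tr_one)
next
  case (Suc n)
  interpret group H by (rule G)
  show ?case using Suc x inj by (simp add: tr_mult)
qed

lemma tr_ord:
  assumes G: "group H" and inj: "inj_on f (carrier H)" and x: "x \<in> carrier H"
  shows "group.ord (tr H f) (f x) = group.ord H x"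
proof -
  interpret group H by (rule G)
  have "\<And>n. (f x [^]\<^bsub>tr H f\<^esub> (n::nat) = \<one>\<^bsub>tr H f\<^esub>) = (x [^]\<^bsub>H\<^esub> n = \<one>\<^bsub>H\<^esub>)"
    using inj x by (simp add: tr_pow[OF G inj x] tr_one inj_on_eq_iff)
  then show ?thesis
    by (simp add: group.ord_def[OF tr_group[OF G inj]] group.ord_def[OF G])
qed

lemma tr_card: "inj_on f (carrier H) \<Longrightarrow> card (carrier (tr H f)) = card (carrier H)"
  by (simp add: tr_carrier card_image)

lemma tr_primes: "inj_on f (carrier H) \<Longrightarrow> group_primes (tr H f) = group_primes H"
  by (simp add: group_primes_def tr_card)

lemma tr_prime_adj:
  assumes G: "group H" and inj: "inj_on f (carrier H)"
  shows "prime_adj (tr H f) p q = prime_adj H p q"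
  unfolding prime_adj_def tr_primes[OF inj]
  using tr_ord[OF G inj] by (auto simp: tr_carrier)

lemma tr_irr:
  assumes G: "group H" and inj: "inj_on f (carrier H)" and irr: "irr_rep H n \<rho>"
  shows "irr_rep (tr H f) n (\<lambda>x. \<rho> (inv_into (carrier H) f x))"
    and "rep_cod (tr H f) n (\<lambda>x. \<rho> (inv_into (carrier H) f x)) = rep_cod H n \<rho>"
proof -
  interpret group H by (rule G)
  let ?r = "\<lambda>x. \<rho> (inv_into (carrier H) f x)"
  have rep: "is_rep H n \<rho>" using irr by (simp add: irr_rep_def)
  have "is_rep (tr H f) n ?r"
    using rep inj unfolding is_rep_def by (auto simp: tr_carrier tr_mult tr_one)
  moreover have "inv_subspace (tr H f) n ?r W = inv_subspace H n \<rho> W" for W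
    using inj unfolding inv_subspace_def by (auto simp: tr_carrier)
  ultimately show "irr_rep (tr H f) n ?r" using irr by (simp add: irr_rep_def)
  have "rep_ker (tr H f) n ?r = f ` rep_ker H n \<rho>"
    using inj unfolding rep_ker_def by (auto simp: tr_carrier)
  moreover have "inj_on f (rep_ker H n \<rho>)"
    using inj by (rule inj_on_subset) (auto simp: rep_ker_def)
  ultimately show "rep_cod (tr H f) n ?r = rep_cod H n \<rho>"
    unfolding rep_cod_def by (simp add: tr_card[OF inj] card_image)
qed

lemma tr_cod_adj:
  assumes G: "group H" and inj: "inj_on f (carrier H)" and c: "cod_adj H p q"
  shows "cod_adj (tr H f) p q"
  using c tr_irr[OF G inj] unfolding cod_adj_def tr_primes[OF inj] by metis



definition Zm :: "nat \<Rightarrow> nat monoid" where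
  "Zm m = \<lparr>carrier = {..<m}, Group.monoid.mult = (\<lambda>a b. (a + b) mod m), Group.monoid.one = 0\<rparr>"

lemma Zm_group: "m > 0 \<Longrightarrow> group (Zm m)"
proof (rule groupI)
  assume m: "m > 0"
  show "\<exists>y\<in>carrier (Zm m). y \<otimes>\<^bsub>Zm m\<^esub> x = \<one>\<^bsub>Zm m\<^esub>" if "x \<in> carrier (Zm m)" for x
    by (rule bexI[of _ "(m - x) mod m"]) (use that m in \<open>auto simp: Zm_def mod_add_left_eq\<close>)
qed (auto simp: Zm_def mod_add_left_eq mod_add_right_eq add.assoc)

lemma Zm_pow: "x \<in> carrier (Zm m) \<Longrightarrow> x [^]\<^bsub>Zm m\<^esub> (n::nat) = (x * n) mod m"
  by (induction n) (auto simp: Zm_def mod_add_left_eq mod_add_right_eq add.commute)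

lemma sym_pow: "\<sigma> [^]\<^bsub>sym_group k\<^esub> (n::nat) = \<sigma> ^^ n"
  by (induction n) (auto simp: sym_group_def funpow_Suc_right simp del: funpow.simps)

lemma DirProd_pow: "(a, b) [^]\<^bsub>G \<times>\<times> H\<^esub> (n::nat) = (a [^]\<^bsub>G\<^esub> n, b [^]\<^bsub>H\<^esub> n)"
  by (induction n) auto

lemma prime5: "prime (5::nat)" 
proof -
  have "{2..<5::nat} = {2,3,4}" by auto
  then show ?thesis by (simp add: prime_nat_iff' dvd_eq_mod_eq_0)
qed
lemma prime3: "prime (3::nat)" 
proof -
  have "{2..<3::nat} = {2}" by auto
  then show ?thesis by (simp add: prime_nat_iff' dvd_eq_mod_eq_0)
qed

definition HH :: "nat \<Rightarrow> ((nat \<Rightarrow> nat) \<times> nat) monoid" where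
  "HH k = sym_group 5 \<times>\<times> Zm (2^k)"

lemma HH_group: "group (HH k)"
  unfolding HH_def by (intro DirProd_group sym_group_is_group Zm_group) simp

lemma HH_pow: "(\<sigma>, c) \<in> carrier (HH k) \<Longrightarrow> (\<sigma>, c) [^]\<^bsub>HH k\<^esub> (n::nat) = (\<sigma> ^^ n, (c * n) mod 2^k)"
  unfolding HH_def by (simp add: DirProd_pow sym_pow Zm_pow)

lemma HH_carrier: "carrier (HH k) = {p. p permutes {1..5}} \<times> {..<2^k}"
  by (simp add: HH_def sym_group_def Zm_def)

lemma HH_one: "\<one>\<^bsub>HH k\<^esub> = (id, 0)"
  by (simp add: HH_def sym_group_def Zm_def)

lemma HH_card: "card (carrier (HH k)) = 120 * 2^k"
proof -
  have "card {p. p permutes {1..(5::nat)}} = fact 5" by (rule card_permutations) auto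
  then show ?thesis by (simp add: HH_carrier card_cartesian_product fact_numeral)
qed

lemma HH_finite: "finite (carrier (HH k))"
proof -
  have "finite {p. p permutes {1..(5::nat)}}" by (rule finite_permutations) auto
  then show ?thesis by (simp add: HH_carrier)
qed

lemma HH_primes: "group_primes (HH k) = {2,3,5}"
proof -
  have "prime p \<and> p dvd 120 * 2^k \<longleftrightarrow> p \<in> {2,3,5}" for p :: nat
  proof
    assume a: "prime p \<and> p dvd 120 * 2^k"
    have e: "120 * 2^k = (2::nat)^(k+3) * 3 * 5" by (simp add: power_add)
    from a have "p dvd 2^(k+3) \<or> p dvd 3 \<or> p dvd 5"
      unfolding e by (metis prime_dvd_mult_eq_nat)
    then have "p dvd 2 \<or> p dvd 3 \<or> p dvd 5" using a prime_dvd_power by blast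
    show "p \<in> {2,3,5}" using a prime3 prime5 \<open>p dvd 2 \<or> p dvd 3 \<or> p dvd 5\<close>
      by (metis insertCI primes_dvd_imp_eq two_is_prime_nat)
  next
    assume "p \<in> {2,3,5}"
    then show "prime p \<and> p dvd 120 * 2^k" by (auto intro: dvd_mult2)
  qed
  then show ?thesis by (auto simp: group_primes_def HH_card)
qed



definition bv :: "nat \<Rightarrow> complex vec" where
  "bv p = vec 4 (\<lambda>j. if p = j+1 then 1 else 0)"

definition rho :: "(nat \<Rightarrow> nat) \<Rightarrow> complex mat" where
  "rho \<sigma> = mat 4 4 (\<lambda>(j,i). (if \<sigma> (i+1) = j+1 then 1 else 0) - (if \<sigma> 5 = j+1 then 1 else 0))"

lemma sum4: "(\<Sum>i\<in>{0..<4::nat}. f i) = f 0 + f 1 + f 2 + (f 3 :: complex)"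
  by (simp add: numeral_eq_Suc atLeast0LessThan lessThan_Suc add.commute add.left_commute)

lemma rho_carrier[simp]: "rho \<sigma> \<in> carrier_mat 4 4" by (simp add: rho_def)
lemma bv_carrier[simp]: "bv p \<in> carrier_vec 4" by (simp add: bv_def)

lemma rho_bv:
  assumes "c \<in> {1..5}"
  shows "rho \<sigma> *\<^sub>v bv c = bv (\<sigma> c) - bv (\<sigma> 5)"
proof (rule eq_vecI)
  show "dim_vec (rho \<sigma> *\<^sub>v bv c) = dim_vec (bv (\<sigma> c) - bv (\<sigma> 5))" by (simp add: rho_def bv_def)
  fix j assume "j < dim_vec (bv (\<sigma> c) - bv (\<sigma> 5))"
  then have j: "j < 4" by (simp add: bv_def)
  have "(rho \<sigma> *\<^sub>v bv c) $ j = (\<Sum>i\<in>{0..<4}. rho \<sigma> $$ (j,i) * bv c $ i)"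
    using j by (simp add: mult_mat_vec_def scalar_prod_def rho_def bv_def)
  also have "\<dots> = (bv (\<sigma> c) - bv (\<sigma> 5)) $ j"
  proof -
    have "c = 1 \<or> c = 2 \<or> c = 3 \<or> c = 4 \<or> c = 5" using assms by auto
    then show ?thesis using j unfolding sum4 by (auto simp: rho_def bv_def)
  qed
  finally show "(rho \<sigma> *\<^sub>v bv c) $ j = (bv (\<sigma> c) - bv (\<sigma> 5)) $ j" .
qed

lemma col_rho: "i < 4 \<Longrightarrow> col (rho \<tau>) i = bv (\<tau> (i+1)) - bv (\<tau> 5)"
  by (rule eq_vecI) (auto simp: rho_def bv_def)

lemma rho_mult:
  assumes "\<tau> ` {1..5} \<subseteq> {1..5}"
  shows "rho (\<sigma> \<circ> \<tau>) = rho \<sigma> * rho \<tau>"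
proof (rule mat_col_eqI)
  fix i assume "i < dim_col (rho \<sigma> * rho \<tau>)"
  then have i: "i < 4" by (simp add: rho_def)
  have "i+1 \<in> {1..5}" "(5::nat) \<in> {1..5}" using i by auto
  then have a: "\<tau> (i+1) \<in> {1..5}" "\<tau> 5 \<in> {1..5}" using assms by blast+
  have "col (rho \<sigma> * rho \<tau>) i = rho \<sigma> *\<^sub>v (bv (\<tau> (i+1)) - bv (\<tau> 5))"
    using i col_rho[OF i, of \<tau>] by (simp add: col_mult2[of _ 4 4 _ 4])
  also have "\<dots> = rho \<sigma> *\<^sub>v bv (\<tau> (i+1)) - rho \<sigma> *\<^sub>v bv (\<tau> 5)"
    by (rule mult_minus_distrib_mat_vec) (auto simp: rho_def)
  also have "\<dots> = col (rho (\<sigma> \<circ> \<tau>)) i"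
    using i a by (simp add: rho_bv col_rho) (intro eq_vecI; simp add: bv_def)
  finally show "col (rho (\<sigma> \<circ> \<tau>)) i = col (rho \<sigma> * rho \<tau>) i" by simp
qed (auto simp: rho_def)

lemma rho_id: "rho id = 1\<^sub>m 4"
  by (rule eq_matI) (auto simp: rho_def)

definition xv :: "complex vec \<Rightarrow> nat \<Rightarrow> complex" where
  "xv v p = (if p \<le> 4 then v $ (p - 1) else - (v$0 + v$1 + v$2 + v$3))"

lemma rho_apply:
  assumes s: "\<sigma> permutes {1..5}" and v: "v \<in> carrier_vec 4" and j: "j < 4"
  shows "(rho \<sigma> *\<^sub>v v) $ j = xv v (inv' \<sigma> (j+1))"
proof -
  define q where "q = inv' \<sigma> (j+1)"
  have jq: "j + 1 \<in> {1..5}" using j by auto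
  have q: "q \<in> {1..5}" unfolding q_def using permutes_in_image[OF permutes_inv[OF s]] jq by blast
  have sq: "\<sigma> q = j + 1" unfolding q_def by (meson permutes_inverses(1) s)
  have eqv: "\<sigma> x = j + 1 \<longleftrightarrow> x = q" for x
    using sq permutes_inj[OF s] by (metis injD)
  have "(rho \<sigma> *\<^sub>v v) $ j = (\<Sum>i\<in>{0..<4}. rho \<sigma> $$ (j,i) * v $ i)"
    using j v by (simp add: mult_mat_vec_def scalar_prod_def rho_def)
  also have "\<dots> = (\<Sum>i\<in>{0..<4}. ((if i + 1 = q then 1 else 0) - (if q = 5 then 1 else 0)) * v $ i)"
  proof (rule sum.cong[OF refl])
    fix i assume "i \<in> {0..<4::nat}"
    then have "rho \<sigma> $$ (j,i) = (if i + 1 = q then 1 else 0) - (if q = 5 then 1 else 0)"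
      using j eqv[of "i+1"] eqv[of 5] by (simp add: rho_def)
    then show "rho \<sigma> $$ (j,i) * v $ i = ((if i + 1 = q then 1 else 0) - (if q = 5 then 1 else 0)) * v $ i"
      by simp
  qed
  also have "\<dots> = xv v q"
  proof -
    have "q = 1 \<or> q = 2 \<or> q = 3 \<or> q = 4 \<or> q = 5" using q by auto
    then show ?thesis unfolding sum4 by (auto simp: xv_def)
  qed
  finally show ?thesis by (simp add: q_def)
qed

lemma bv5: "bv 5 = 0\<^sub>v 4" by (rule eq_vecI) (auto simp: bv_def)

lemma rho_irr_core:
  assumes Wc: "W \<subseteq> carrier_vec 4"
    and Wadd: "\<forall>v\<in>W. \<forall>w\<in>W. v + w \<in> W"
    and Wsm: "\<forall>c::complex. \<forall>v\<in>W. c \<cdot>\<^sub>v v \<in> W"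
    and Winv: "\<And>\<sigma> v. \<sigma> permutes {1..5} \<Longrightarrow> v \<in> W \<Longrightarrow> rho \<sigma> *\<^sub>v v \<in> W"
    and v: "v \<in> W" "v \<noteq> 0\<^sub>v 4"
  shows "W = carrier_vec 4"
proof -
  have vc: "v \<in> carrier_vec 4" using v Wc by auto
  have "\<exists>a\<in>{1..4}. xv v a \<noteq> xv v 5"
  proof (rule ccontr)
    assume "\<not> ?thesis"
    then have e: "xv v a = xv v 5" if "a \<in> {1..4}" for a using that by blast
    have e1: "v$0 = xv v 5" "v$1 = xv v 5" "v$2 = xv v 5" "v$3 = xv v 5"
      using e[of 1] e[of 2] e[of 3] e[of 4] by (auto simp: xv_def)
    have s5: "xv v 5 = - (v$0 + v$1 + v$2 + v$3)" by (simp add: xv_def)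
    then have "xv v 5 = - (xv v 5 + xv v 5 + xv v 5 + xv v 5)" by (simp only: e1)
    then have z: "xv v 5 = 0" by simp
    have "v = 0\<^sub>v 4"
    proof (rule eq_vecI)
      fix j assume "j < dim_vec (0\<^sub>v 4 :: complex vec)"
      then have "j = 0 \<or> j = 1 \<or> j = 2 \<or> j = 3" by auto
      then show "v $ j = 0\<^sub>v 4 $ j" using e1 z \<open>j < _\<close> by auto
    qed (use vc in simp)
    with v show False by simp
  qed
  then obtain a where a: "a \<in> {1..4}" "xv v a \<noteq> xv v 5" by blast
  define t where "t = Transposition.transpose a 5"
  have tp: "t permutes {1..5}" unfolding t_def using a by (intro permutes_swap_id) auto
  have tinv: "inv' t = t" unfolding t_def by simp
  have u: "v + (-1) \<cdot>\<^sub>v (rho t *\<^sub>v v) \<in> W" using Wadd Wsm Winv[OF tp v(1)] v(1) by blast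
  have ueq: "v + (-1) \<cdot>\<^sub>v (rho t *\<^sub>v v) = (xv v a - xv v 5) \<cdot>\<^sub>v bv a"
  proof (rule eq_vecI)
    show "dim_vec (v + (-1) \<cdot>\<^sub>v (rho t *\<^sub>v v)) = dim_vec ((xv v a - xv v 5) \<cdot>\<^sub>v bv a)"
      using vc by (simp add: rho_def bv_def)
    fix j assume "j < dim_vec ((xv v a - xv v 5) \<cdot>\<^sub>v bv a)"
    then have j: "j < 4" by (simp add: bv_def)
    have "(v + (-1) \<cdot>\<^sub>v (rho t *\<^sub>v v)) $ j = v $ j - xv v (t (j+1))"
      using j vc rho_apply[OF tp vc j] tinv by (simp add: rho_def)
    also have "\<dots> = ((xv v a - xv v 5) \<cdot>\<^sub>v bv a) $ j"
    proof -
      have tj: "t (j+1) = (if j+1 = a then 5 else j+1)" using j a by (auto simp: t_def transpose_def)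
      have vj: "v $ j = xv v (j+1)" using j by (simp add: xv_def)
      show ?thesis
      proof (cases "j + 1 = a")
        case True
        then show ?thesis using j tj vj by (simp add: bv_def)
      next
        case False
        then show ?thesis using j tj vj by (simp add: bv_def)
      qed
    qed
    finally show "(v + (-1) \<cdot>\<^sub>v (rho t *\<^sub>v v)) $ j = ((xv v a - xv v 5) \<cdot>\<^sub>v bv a) $ j" .
  qed
  have "(1 / (xv v a - xv v 5)) \<cdot>\<^sub>v ((xv v a - xv v 5) \<cdot>\<^sub>v bv a) \<in> W"
    using u ueq Wsm by metis
  moreover have "(1 / (xv v a - xv v 5)) \<cdot>\<^sub>v ((xv v a - xv v 5) \<cdot>\<^sub>v bv a) = bv a"
    using a(2) by (simp add: smult_smult_assoc)
  ultimately have ba: "bv a \<in> W" by simp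
  have bc: "bv c \<in> W" if c: "c \<in> {1..4}" for c
  proof -
    define s where "s = Transposition.transpose a c"
    have sp: "s permutes {1..5}" unfolding s_def using a c by (intro permutes_swap_id) auto
    have "rho s *\<^sub>v bv a = bv (s a) - bv (s 5)" using a by (intro rho_bv) auto
    also have "\<dots> = bv c" using a c unfolding s_def by (simp add: bv5)
    finally show ?thesis using Winv[OF sp ba] by simp
  qed
  show ?thesis
  proof
    show "carrier_vec 4 \<subseteq> W"
    proof
      fix w :: "complex vec" assume w: "w \<in> carrier_vec 4"
      have "w = w$0 \<cdot>\<^sub>v bv 1 + w$1 \<cdot>\<^sub>v bv 2 + w$2 \<cdot>\<^sub>v bv 3 + w$3 \<cdot>\<^sub>v bv 4"
      proof (rule eq_vecI)
        fix j assume "j < dim_vec (w$0 \<cdot>\<^sub>v bv 1 + w$1 \<cdot>\<^sub>v bv 2 + w$2 \<cdot>\<^sub>v bv 3 + w$3 \<cdot>\<^sub>v bv 4)"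
        then have "j = 0 \<or> j = 1 \<or> j = 2 \<or> j = 3" by (auto simp: bv_def)
        then show "w $ j = (w$0 \<cdot>\<^sub>v bv 1 + w$1 \<cdot>\<^sub>v bv 2 + w$2 \<cdot>\<^sub>v bv 3 + w$3 \<cdot>\<^sub>v bv 4) $ j"
          by (auto simp: bv_def)
      qed (use w in \<open>simp add: bv_def\<close>)
      moreover have "w$0 \<cdot>\<^sub>v bv 1 + w$1 \<cdot>\<^sub>v bv 2 + w$2 \<cdot>\<^sub>v bv 3 + w$3 \<cdot>\<^sub>v bv 4 \<in> W"
      proof -
        have s1: "w$0 \<cdot>\<^sub>v bv 1 \<in> W" using Wsm bc[of 1] by auto
        have s2: "w$1 \<cdot>\<^sub>v bv 2 \<in> W" using Wsm bc[of 2] by auto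
        have s3: "w$2 \<cdot>\<^sub>v bv 3 \<in> W" using Wsm bc[of 3] by auto
        have s4: "w$3 \<cdot>\<^sub>v bv 4 \<in> W" using Wsm bc[of 4] by auto
        have "w$0 \<cdot>\<^sub>v bv 1 + w$1 \<cdot>\<^sub>v bv 2 \<in> W" using s1 s2 Wadd by blast
        then have "w$0 \<cdot>\<^sub>v bv 1 + w$1 \<cdot>\<^sub>v bv 2 + w$2 \<cdot>\<^sub>v bv 3 \<in> W" using s3 Wadd by blast
        then show ?thesis using s4 Wadd by blast
      qed
      ultimately show "w \<in> W" by simp
    qed
  qed (use Wc in auto)
qed



lemma fix_mult: "(f ^^ j) x = x \<Longrightarrow> (f ^^ (j * m)) x = x"
proof (induction m)
  case 0 then show ?case by simp
next
  case (Suc m)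
  have "(f ^^ (j * Suc m)) x = (f ^^ j) ((f ^^ (j * m)) x)"
    by (simp add: funpow_add)
  then show ?case using Suc by simp
qed

lemma period:
  assumes s: "\<sigma> permutes {1..5::nat}" and x: "x \<in> {1..5}"
  shows "\<exists>j\<in>{1..5}. (\<sigma> ^^ j) x = x"
proof -
  define h where "h i = (\<sigma> ^^ i) x" for i
  have hs: "h ` {0..5} \<subseteq> {1..5}"
    unfolding h_def using permutes_in_image[OF permutes_funpow[OF s]] x by blast
  have "\<not> inj_on h {0..5}"
  proof
    assume "inj_on h {0..5}"
    then have "card {0..5::nat} \<le> card {1..5::nat}" using hs by (intro card_inj_on_le) auto
    then show False by simp
  qed
  then obtain i1 i2 where i: "i1 \<in> {0..5}" "i2 \<in> {0..5}" "i1 \<noteq> i2" "h i1 = h i2"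
    unfolding inj_on_def by blast
  have "\<exists>a b. a < b \<and> b \<le> 5 \<and> h a = h b"
    using i by (metis atLeastAtMost_iff linorder_neqE_nat)
  then obtain a b where ab: "a < b" "b \<le> 5" "h a = h b" by blast
  have "(\<sigma> ^^ a) ((\<sigma> ^^ (b - a)) x) = (\<sigma> ^^ a) x"
    using ab unfolding h_def by (metis funpow_add le_add_diff_inverse less_imp_le comp_apply)
  then have "(\<sigma> ^^ (b - a)) x = x"
    using permutes_inj[OF permutes_funpow[OF s]] by (metis injD)
  then show ?thesis using ab by (intro bexI[of _ "b - a"]) auto
qed

lemma S5_pow:
  assumes s: "\<sigma> permutes {1..5::nat}"
  shows "\<sigma> ^^ 12 = id \<or> \<sigma> ^^ 20 = id"
proof (cases "\<forall>x\<in>{1..5}. \<exists>j\<in>{1..4}. (\<sigma> ^^ j) x = x")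
  case True
  have "(\<sigma> ^^ 12) x = x" for x
  proof (cases "x \<in> {1..5}")
    case True
    then obtain j where j: "j \<in> {1..4}" "(\<sigma> ^^ j) x = x" using \<open>\<forall>x\<in>_. _\<close> by blast
    have "j = 1 \<or> j = 2 \<or> j = 3 \<or> j = 4" using j(1) by auto
    then have "12 = j * (12 div j)" by (elim disjE) simp_all
    then show ?thesis using fix_mult[OF j(2)] by metis
  next
    case False
    then show ?thesis using permutes_not_in[OF permutes_funpow[OF s]] by blast
  qed
  then show ?thesis by auto
next
  case False
  then obtain x where x: "x \<in> {1..5}" "\<forall>j\<in>{1..4}. (\<sigma> ^^ j) x \<noteq> x" by blast
  obtain j where j: "j \<in> {1..5}" "(\<sigma> ^^ j) x = x" using period[OF s x(1)] by blast
  have j5: "j = 5"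
  proof (rule ccontr)
    assume "j \<noteq> 5"
    then have "j \<in> {1..4}" using j(1) by auto
    then show False using x(2) j(2) by blast
  qed
  define h where "h i = (\<sigma> ^^ i) x" for i
  have inj: "inj_on h {0..<5}"
  proof (rule inj_onI)
    fix a b assume ab: "a \<in> {0..<5}" "b \<in> {0..<5}" "h a = h b"
    show "a = b"
    proof (rule ccontr)
      assume "a \<noteq> b"
      then consider "a < b" | "b < a" by linarith
      then show False
      proof cases
        case 1
        have "(\<sigma> ^^ a) ((\<sigma> ^^ (b - a)) x) = (\<sigma> ^^ a) x"
          using ab 1 unfolding h_def by (metis funpow_add le_add_diff_inverse less_imp_le comp_apply)
        then have "(\<sigma> ^^ (b - a)) x = x"
          using permutes_inj[OF permutes_funpow[OF s]] by (metis injD)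
        moreover have "b - a \<in> {1..4}" using 1 ab by auto
        ultimately show False using x(2) by blast
      next
        case 2
        have "(\<sigma> ^^ b) ((\<sigma> ^^ (a - b)) x) = (\<sigma> ^^ b) x"
          using ab 2 unfolding h_def by (metis funpow_add le_add_diff_inverse less_imp_le comp_apply)
        then have "(\<sigma> ^^ (a - b)) x = x"
          using permutes_inj[OF permutes_funpow[OF s]] by (metis injD)
        moreover have "a - b \<in> {1..4}" using 2 ab by auto
        ultimately show False using x(2) by blast
      qed
    qed
  qed
  have hs: "h ` {0..<5} \<subseteq> {1..5}"
    unfolding h_def using permutes_in_image[OF permutes_funpow[OF s]] x by blast
  have heq: "h ` {0..<5} = {1..5}"
    by (rule card_subset_eq) (use hs card_image[OF inj] in auto)
  have f5: "(\<sigma> ^^ 5) y = y" for y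
  proof (cases "y \<in> {1..5}")
    case True
    then have "y \<in> h ` {0..<5}" using heq by simp
    then obtain i where i: "y = (\<sigma> ^^ i) x" unfolding h_def by blast
    have "(\<sigma> ^^ 5) y = (\<sigma> ^^ (5 + i)) x" using i by (simp add: funpow_add)
    also have "\<dots> = (\<sigma> ^^ i) ((\<sigma> ^^ 5) x)" by (simp add: funpow_add add.commute)
    also have "\<dots> = y" using i j j5 by simp
    finally show ?thesis .
  next
    case False
    then show ?thesis using permutes_not_in[OF permutes_funpow[OF s]] by blast
  qed
  then have "\<sigma> ^^ 5 = id" by auto
  then have "\<sigma> ^^ (5 * 4) = id" by (metis funpow_mult id_funpow)
  then show ?thesis by simp
qed



lemma rho_ker:
  assumes s: "\<sigma> permutes {1..5}" and r: "rho \<sigma> = 1\<^sub>m 4"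
  shows "\<sigma> = id"
proof -
  have e: "bv (\<sigma> c) - bv (\<sigma> 5) = bv c" if "c \<in> {1..4}" for c
  proof -
    have "rho \<sigma> *\<^sub>v bv c = bv c" using r by simp
    then show ?thesis using rho_bv[of c \<sigma>] that by simp
  qed
  have s5: "\<sigma> 5 \<in> {1..5}" using permutes_in_image[OF s] by simp
  have "\<sigma> 5 = 5"
  proof (rule ccontr)
    assume "\<sigma> 5 \<noteq> 5"
    then have d: "\<sigma> 5 \<in> {1..4}" using s5 by auto
    have "(bv (\<sigma> (\<sigma> 5)) - bv (\<sigma> 5)) $ (\<sigma> 5 - 1) = bv (\<sigma> 5) $ (\<sigma> 5 - 1)"
      using e[OF d] by simp
    then show False using d by (auto simp: bv_def split: if_splits)
  qed
  have "\<sigma> c = c" if c: "c \<in> {1..4}" for c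
  proof -
    have "(bv (\<sigma> c) - bv (\<sigma> 5)) $ (c - 1) = bv c $ (c - 1)"
      using e[OF c] by simp
    then show ?thesis using c \<open>\<sigma> 5 = 5\<close> by (auto simp: bv_def split: if_splits)
  qed
  then have "\<sigma> x = x" for x
  proof -
    consider "x \<in> {1..4}" | "x = 5" | "x \<notin> {1..5}" by fastforce
    then show ?thesis
    proof cases
      case 1 then show ?thesis using \<open>\<And>c. c \<in> {1..4} \<Longrightarrow> \<sigma> c = c\<close> by blast
    next
      case 2 then show ?thesis using \<open>\<sigma> 5 = 5\<close> by simp
    next
      case 3 then show ?thesis using permutes_not_in[OF s] by blast
    qed
  qed
  then show ?thesis by auto
qed

definition RR :: "(nat \<Rightarrow> nat) \<times> nat \<Rightarrow> complex mat" where
  "RR g = rho (fst g)"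

lemma HH_mult: "g \<otimes>\<^bsub>HH k\<^esub> h = (fst g \<circ> fst h, (snd g + snd h) mod 2^k)"
  by (simp add: HH_def mult_DirProd' sym_group_def Zm_def)

lemma RR_irr: "irr_rep (HH k) 4 RR"
proof -
  have rep: "is_rep (HH k) 4 RR"
    unfolding is_rep_def
  proof (intro conjI ballI)
    fix g h assume g: "g \<in> carrier (HH k)" and h: "h \<in> carrier (HH k)"
    from h have "fst h permutes {1..5}" by (auto simp: HH_carrier)
    then have "fst h ` {1..5} \<subseteq> {1..5}" using permutes_image[of "fst h" "{1..5::nat}"] by (rule_tac equalityD1) auto
    then show "RR (g \<otimes>\<^bsub>HH k\<^esub> h) = RR g * RR h" by (simp add: RR_def HH_mult rho_mult)
  qed (auto simp: RR_def HH_one rho_id)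
  have "W = {0\<^sub>v 4} \<or> W = carrier_vec 4" if W: "inv_subspace (HH k) 4 RR W" for W
  proof (cases "W = {0\<^sub>v 4}")
    case False
    from W have W0: "0\<^sub>v 4 \<in> W" by (simp add: inv_subspace_def)
    with False obtain v where v: "v \<in> W" "v \<noteq> 0\<^sub>v 4" by blast
    have "W = carrier_vec 4"
    proof (rule rho_irr_core[OF _ _ _ _ v])
      fix \<sigma> :: "nat \<Rightarrow> nat" and w assume "\<sigma> permutes {1..5}" "w \<in> W"
      moreover have "(\<sigma>, 0) \<in> carrier (HH k)" using \<open>\<sigma> permutes _\<close> by (simp add: HH_carrier)
      ultimately show "rho \<sigma> *\<^sub>v w \<in> W" using W unfolding inv_subspace_def RR_def by force
    qed (use W in \<open>auto simp: inv_subspace_def\<close>)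
    then show ?thesis by simp
  qed simp
  then show ?thesis using rep by (simp add: irr_rep_def)
qed

lemma RR_ker: "rep_ker (HH k) 4 RR = {id} \<times> {..<2^k}"
  unfolding rep_ker_def RR_def HH_carrier
  using rho_ker rho_id by (auto simp: permutes_id)

lemma RR_cod: "rep_cod (HH k) 4 RR = 30"
proof -
  have "card (rep_ker (HH k) 4 RR) = 2^k" by (simp add: RR_ker card_cartesian_product)
  then show ?thesis unfolding rep_cod_def HH_card by simp
qed

lemma HH_cod_adj: "p \<in> {2,3,5} \<Longrightarrow> q \<in> {2,3,5} \<Longrightarrow> p \<noteq> q \<Longrightarrow> cod_adj (HH k) p q"
  unfolding cod_adj_def HH_primes using RR_irr RR_cod by fastforce



definition c3 :: "nat \<Rightarrow> nat" where
  "c3 = Transposition.transpose 1 2 \<circ> Transposition.transpose 1 3"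
definition c5 :: "nat \<Rightarrow> nat" where
  "c5 = Transposition.transpose 1 2 \<circ> Transposition.transpose 2 3 \<circ> Transposition.transpose 3 4 \<circ> Transposition.transpose 4 5"

lemma c3_perm: "c3 permutes {1..5}"
  unfolding c3_def by (intro permutes_compose permutes_swap_id) auto
lemma c5_perm: "c5 permutes {1..5}"
  unfolding c5_def by (intro permutes_compose permutes_swap_id) auto

lemma funpow_mod: "f ^^ m = id \<Longrightarrow> f ^^ n = f ^^ (n mod m)"
proof -
  assume m: "f ^^ m = id"
  have "f ^^ n = f ^^ (m * (n div m) + n mod m)" by simp
  also have "\<dots> = f ^^ (m * (n div m)) \<circ> f ^^ (n mod m)" by (simp only: funpow_add)
  also have "\<dots> = (f ^^ m) ^^ (n div m) \<circ> f ^^ (n mod m)" by (simp only: funpow_mult)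
  also have "\<dots> = f ^^ (n mod m)" using m by simp
  finally show ?thesis .
qed

lemma c3_3: "c3 ^^ 3 = id"
  by (rule ext) (simp add: c3_def transpose_def eval_nat_numeral)

lemma c3_dvd: "c3 ^^ n = id \<Longrightarrow> 3 dvd n"
proof -
  assume a: "c3 ^^ n = id"
  then have b: "c3 ^^ (n mod 3) = id" using funpow_mod[OF c3_3, of n] by simp
  have "n mod 3 = 0 \<or> n mod 3 = 1 \<or> n mod 3 = 2" by auto
  moreover have "n mod 3 \<noteq> 1"
  proof
    assume "n mod 3 = 1" then have "c3 ^^ 1 = id" using b by simp
    then have "c3 1 = 1" by simp
    then show False by (simp add: c3_def transpose_def)
  qed
  moreover have "n mod 3 \<noteq> 2"
  proof
    assume "n mod 3 = 2" then have "(c3 ^^ 2) 1 = 1" using b by (metis id_apply)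
    then show False by (simp add: c3_def transpose_def eval_nat_numeral)
  qed
  ultimately show ?thesis by auto
qed

lemma c5_vals: "c5 1 = 2" "c5 2 = 3" "c5 3 = 4" "c5 4 = 5" "c5 5 = 1"
  by (simp_all add: c5_def)

lemma c5_vals': "c5 (Suc 0) = Suc (Suc 0)" "c5 (Suc (Suc 0)) = Suc (Suc (Suc 0))"
  "c5 (Suc (Suc (Suc 0))) = Suc (Suc (Suc (Suc 0)))" "c5 (Suc (Suc (Suc (Suc 0)))) = Suc (Suc (Suc (Suc (Suc 0))))"
  "c5 (Suc (Suc (Suc (Suc (Suc 0))))) = Suc 0"
  using c5_vals by (simp_all add: eval_nat_numeral)

lemma c5_5: "c5 ^^ 5 = id"
proof
  fix x
  show "(c5 ^^ 5) x = id x"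
  proof (cases "x \<in> {1..5}")
    case True
    then have "x = 1 \<or> x = 2 \<or> x = 3 \<or> x = 4 \<or> x = 5" by auto
    then show ?thesis by (auto simp: c5_vals' eval_nat_numeral)
  next
    case False
    then show ?thesis using permutes_not_in[OF permutes_funpow[OF c5_perm]] by simp
  qed
qed

lemma c5_dvd: "c5 ^^ n = id \<Longrightarrow> 5 dvd n"
proof -
  assume a: "c5 ^^ n = id"
  then have b: "(c5 ^^ (n mod 5)) 1 = 1" using funpow_mod[OF c5_5, of n] by simp
  have "n mod 5 < 5" by simp
  then have "n mod 5 = 0 \<or> n mod 5 = 1 \<or> n mod 5 = 2 \<or> n mod 5 = 3 \<or> n mod 5 = 4" by linarith
  moreover have "(c5 ^^ 1) 1 \<noteq> 1" "(c5 ^^ 2) 1 \<noteq> 1" "(c5 ^^ 3) 1 \<noteq> 1" "(c5 ^^ 4) 1 \<noteq> 1"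
    by (simp_all add: c5_vals' eval_nat_numeral)
  ultimately show ?thesis using b by (metis dvd_eq_mod_eq_0)
qed

lemma adj_elem:
  assumes k: "k \<ge> 1" and c: "\<And>n. c ^^ n = id \<Longrightarrow> p dvd n" and cp: "c permutes {1..5}"
  shows "2 dvd group.ord (HH k) (c, 1) \<and> p dvd group.ord (HH k) (c, 1)" "(c, 1) \<in> carrier (HH k)"
proof -
  have two: "(2::nat) \<le> 2^k" using k by (metis power_one_right power_increasing one_le_numeral)
  show g: "(c, 1) \<in> carrier (HH k)" using cp two by (simp add: HH_carrier)
  define r where "r = group.ord (HH k) (c, 1)"
  have "(c, 1) [^]\<^bsub>HH k\<^esub> r = \<one>\<^bsub>HH k\<^esub>" unfolding r_def
    by (rule group.pow_ord_eq_1[OF HH_group g])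
  then have "c ^^ r = id" "r mod 2^k = 0" using HH_pow[OF g] by (auto simp: HH_one)
  then have "p dvd r" "2^k dvd r" using c by auto
  moreover have "2 dvd (2::nat)^k" using k by (simp add: dvd_power)
  ultimately have "p dvd r" "2 dvd r" by (auto intro: dvd_trans)
  then show "2 dvd r \<and> p dvd r" by simp
qed

lemma not_dvd_aux: "\<not> (5::nat) dvd 12 * 2^k" "\<not> (3::nat) dvd 20 * 2^k"
proof -
  show "\<not> (5::nat) dvd 12 * 2^k"
  proof
    assume "(5::nat) dvd 12 * 2^k"
    then have "5 dvd (12::nat) \<or> 5 dvd (2::nat)^k" using prime5 prime_dvd_mult_eq_nat by blast
    then have "5 dvd (12::nat) \<or> 5 dvd (2::nat)" using prime5 prime_dvd_power by blast
    then show False by simp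
  qed
  show "\<not> (3::nat) dvd 20 * 2^k"
  proof
    assume "(3::nat) dvd 20 * 2^k"
    then have "3 dvd (20::nat) \<or> 3 dvd (2::nat)^k" using prime3 prime_dvd_mult_eq_nat by blast
    then have "3 dvd (20::nat) \<or> 3 dvd (2::nat)" using prime3 prime_dvd_power by blast
    then show False by simp
  qed
qed

lemma no15: "g \<in> carrier (HH k) \<Longrightarrow> \<not> 15 dvd group.ord (HH k) g"
proof
  assume g: "g \<in> carrier (HH k)" and d: "15 dvd group.ord (HH k) g"
  obtain \<sigma> c where gs: "g = (\<sigma>, c)" by (cases g)
  have s: "\<sigma> permutes {1..5}" using g gs by (simp add: HH_carrier)
  have pw: "g [^]\<^bsub>HH k\<^esub> (m * 2^k) = \<one>\<^bsub>HH k\<^esub>" if "\<sigma> ^^ m = id" for m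
  proof -
    have "\<sigma> ^^ (m * 2^k) = id" using that by (metis funpow_mult id_funpow)
    then show ?thesis using HH_pow[of \<sigma> c k "m * 2^k"] g gs by (simp add: HH_one)
  qed
  have "group.ord (HH k) g dvd 12 * 2^k \<or> group.ord (HH k) g dvd 20 * 2^k"
    using S5_pow[OF s] pw group.pow_eq_id[OF HH_group g] by metis
  moreover have "5 dvd group.ord (HH k) g" "3 dvd group.ord (HH k) g"
  proof -
    have "(5::nat) dvd 15" "(3::nat) dvd 15" by simp_all
    then show "5 dvd group.ord (HH k) g" "3 dvd group.ord (HH k) g" using d dvd_trans by blast+
  qed
  ultimately show False using not_dvd_aux by (meson dvd_trans)
qed

lemma HH_prime_adj:
  assumes k: "k \<ge> 1"
  shows "prime_adj (HH k) p q \<longleftrightarrow> (p = 2 \<and> q \<in> {3,5}) \<or> (q = 2 \<and> p \<in> {3,5})"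
proof
  assume a: "prime_adj (HH k) p q"
  then have pq: "p \<noteq> q" "p \<in> {2,3,5}" "q \<in> {2,3,5}" by (auto simp: prime_adj_def HH_primes)
  from a obtain g where g: "g \<in> carrier (HH k)" "p * q dvd group.ord (HH k) g"
    by (auto simp: prime_adj_def)
  have "p * q \<noteq> 15" using g no15 by metis
  then show "(p = 2 \<and> q \<in> {3,5}) \<or> (q = 2 \<and> p \<in> {3,5})" using pq by auto
next
  assume a: "(p = 2 \<and> q \<in> {3,5}) \<or> (q = 2 \<and> p \<in> {3,5})"
  have e3: "\<exists>g\<in>carrier (HH k). 2 dvd group.ord (HH k) g \<and> 3 dvd group.ord (HH k) g"
    using adj_elem[OF k c3_dvd c3_perm] by blast
  have e5: "\<exists>g\<in>carrier (HH k). 2 dvd group.ord (HH k) g \<and> 5 dvd group.ord (HH k) g"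
    using adj_elem[OF k c5_dvd c5_perm] by blast
  have six: "2 dvd r \<Longrightarrow> 3 dvd r \<Longrightarrow> 6 dvd r" for r :: nat by presburger
  have ten: "2 dvd r \<Longrightarrow> 5 dvd r \<Longrightarrow> 10 dvd r" for r :: nat by presburger
  have e6: "\<exists>g\<in>carrier (HH k). 6 dvd group.ord (HH k) g" using e3 six by blast
  have e10: "\<exists>g\<in>carrier (HH k). 10 dvd group.ord (HH k) g" using e5 ten by blast
  from a show "prime_adj (HH k) p q"
    unfolding prime_adj_def HH_primes using e6 e10 by auto
qed

theorem mainTheorem8:
  shows "\<forall>N::nat. \<exists>G :: nat monoid. group G \<and> finite (carrier G) \<and> card (carrier G) > N \<and>
           is_path3 (group_primes G) (prime_adj G) \<and>
           is_triangle (group_primes G) (cod_adj G)"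
proof
  fix N :: nat
  define k where "k = N + 1"
  have k: "k \<ge> 1" by (simp add: k_def)
  obtain f :: "(nat \<Rightarrow> nat) \<times> nat \<Rightarrow> nat" and n where f: "f ` carrier (HH k) = {i. i < n}" "inj_on f (carrier (HH k))"
    using finite_imp_inj_to_nat_seg[OF HH_finite] by blast
  define G where "G = tr (HH k) f"
  have grp: "group G" unfolding G_def by (rule tr_group[OF HH_group f(2)])
  have fin: "finite (carrier G)" unfolding G_def tr_carrier using HH_finite by simp
  have "N < 2^N" by (rule less_exp)
  moreover have "card (carrier G) = 120 * 2^k" unfolding G_def by (simp add: tr_card[OF f(2)] HH_card)
  moreover have "(2::nat)^N \<le> 120 * 2^k" unfolding k_def by simp
  ultimately have cardG: "card (carrier G) > N" by linarith
  have prG: "group_primes G = {2,3,5}" unfolding G_def tr_primes[OF f(2)] HH_primes ..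
  have adjG: "prime_adj G p q \<longleftrightarrow> (p = 2 \<and> q \<in> {3,5}) \<or> (q = 2 \<and> p \<in> {3,5})" for p q
    unfolding G_def tr_prime_adj[OF HH_group f(2)] HH_prime_adj[OF k] ..
  have ed: "edges {2,3,5} (prime_adj G) = {{2,3},{2,5}}"
    unfolding edges_def adjG by auto
  have c2: "card {{2,3},{2,5::nat}} = 2" by (simp add: doubleton_eq_iff)
  have path: "is_path3 (group_primes G) (prime_adj G)"
    unfolding is_path3_def prG ed c2 by simp
  have tri: "is_triangle (group_primes G) (cod_adj G)"
    unfolding is_triangle_def prG
    using tr_cod_adj[OF HH_group f(2) HH_cod_adj] by (auto simp: G_def)
  show "\<exists>G :: nat monoid. group G \<and> finite (carrier G) \<and> card (carrier G) > N \<and>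
           is_path3 (group_primes G) (prime_adj G) \<and>
           is_triangle (group_primes G) (cod_adj G)"
    using grp fin cardG path tri by blast
qed

end
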